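(* In the setting below, for any integers $1\le i_1<\cdots<i_k\le n$ (with $1\le k\le n$), $$\mathrm{grp}(S\cap F_{i_1}\cap\cdots\cap F_{i_k}\cap F_\sigma)=\mathrm{grp}(S)\cap H_{i_1}\cap\cdots\cap H_{i_k}\cap H_\sigma.$$
   Context: Let $K$ be a field, $n\ge1$, $\lambda=(\lambda_1,\ldots,\lambda_n)$ positive integers, $L=\mathrm{lcm}(\lambda_1,\ldots,\lambda_n)$, $\omega_i=L/\lambda_i$, $\omega=(\omega_1,\ldots,\omega_n)$. Let $S\subseteq\mathbb{N}^{n+1}$ be the semigroup generated by $(\mathbf{e}_i,0)$ ($i=1,\ldots,n$) and $(\beta,1)$ for all $\beta\in\mathbb{N}^n$ with $\omega\cdot\beta\ge L$ (this is the semigroup with $K[S]\cong R[It]$, the Rees algebra of the integral closure $I$ of $(x_1^{\lambda_1},\ldots,x_n^{\lambda_n})$ in $R=K[x_1,\ldots,x_n]$); $\mathrm{grp}(S)=\mathbb{Z}^{n+1}$. $\mathrm{pos}(S)$ is the cone of nonnegative real combinations of elements of $S$. $H_i$ is the $i$-th coordinate hyperplane of $\mathbb{R}^{n+1}$, $F_i=\mathrm{pos}(S)\cap H_i$, $H_\sigma=\{\sigma=0\}$ with $\sigma(\alpha,a_{n+1})=\omega\cdot\alpha-La_{n+1}$, and $F_\sigma=\mathrm{pos}(S)\cap H_\sigma$. *)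

theory Defs
  imports Complex_Main
begin

text \<open>Vectors of Z^(n+1) are modelled as functions nat => int whose coordinates
  are indexed by 1..n+1 (coordinate n+1 is the last one, a_(n+1)); all other
  coordinates are 0.  Real vectors of R^(n+1) likewise as nat => real.\<close>

definition Lval :: "nat \<Rightarrow> (nat \<Rightarrow> nat) \<Rightarrow> nat" where
  "Lval n lam = Lcm (lam ` {1..n})"

definition omega :: "nat \<Rightarrow> (nat \<Rightarrow> nat) \<Rightarrow> nat \<Rightarrow> nat" where
  "omega n lam i = Lval n lam div lam i"

definition unitv :: "nat \<Rightarrow> nat \<Rightarrow> int" where
  "unitv i = (\<lambda>j. if j = i then 1 else 0)"

definition gens :: "nat \<Rightarrow> (nat \<Rightarrow> nat) \<Rightarrow> (nat \<Rightarrow> int) set" where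
  "gens n lam = unitv ` {1..n} \<union>
     {v. v (n+1) = 1 \<and> (\<forall>j\<in>{1..n}. v j \<ge> 0) \<and> (\<forall>j. j \<notin> {1..n+1} \<longrightarrow> v j = 0)
         \<and> (\<Sum>j=1..n. int (omega n lam j) * v j) \<ge> int (Lval n lam)}"

inductive_set semigroup_gen :: "(nat \<Rightarrow> int) set \<Rightarrow> (nat \<Rightarrow> int) set" for G where
  zero: "(\<lambda>_. 0) \<in> semigroup_gen G"
| gen: "g \<in> G \<Longrightarrow> g \<in> semigroup_gen G"
| add: "x \<in> semigroup_gen G \<Longrightarrow> y \<in> semigroup_gen G \<Longrightarrow> (\<lambda>j. x j + y j) \<in> semigroup_gen G"

definition Ssg :: "nat \<Rightarrow> (nat \<Rightarrow> nat) \<Rightarrow> (nat \<Rightarrow> int) set" where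
  "Ssg n lam = semigroup_gen (gens n lam)"

inductive_set grp :: "(nat \<Rightarrow> int) set \<Rightarrow> (nat \<Rightarrow> int) set" for T where
  zero: "(\<lambda>_. 0) \<in> grp T"
| gen: "t \<in> T \<Longrightarrow> t \<in> grp T"
| add: "x \<in> grp T \<Longrightarrow> y \<in> grp T \<Longrightarrow> (\<lambda>j. x j + y j) \<in> grp T"
| neg: "x \<in> grp T \<Longrightarrow> (\<lambda>j. - x j) \<in> grp T"

definition emb :: "(nat \<Rightarrow> int) \<Rightarrow> (nat \<Rightarrow> real)" where
  "emb v = (\<lambda>j. real_of_int (v j))"

definition pos :: "(nat \<Rightarrow> int) set \<Rightarrow> (nat \<Rightarrow> real) set" where
  "pos T = {x. \<exists>A c. finite A \<and> A \<subseteq> T \<and> (\<forall>a\<in>A. c a \<ge> (0::real)) \<and>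
                    x = (\<lambda>j. \<Sum>a\<in>A. c a * real_of_int (a j))}"

definition Hcoord :: "nat \<Rightarrow> (nat \<Rightarrow> real) set" where
  "Hcoord i = {x. x i = 0}"

definition sigma :: "nat \<Rightarrow> (nat \<Rightarrow> nat) \<Rightarrow> (nat \<Rightarrow> real) \<Rightarrow> real" where
  "sigma n lam x = (\<Sum>j=1..n. real (omega n lam j) * x j) - real (Lval n lam) * x (n+1)"

definition Hsigma :: "nat \<Rightarrow> (nat \<Rightarrow> nat) \<Rightarrow> (nat \<Rightarrow> real) set" where
  "Hsigma n lam = {x. sigma n lam x = 0}"

definition Fcoord :: "nat \<Rightarrow> (nat \<Rightarrow> nat) \<Rightarrow> nat \<Rightarrow> (nat \<Rightarrow> real) set" where
  "Fcoord n lam i = pos (Ssg n lam) \<inter> Hcoord i"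

definition Fsigma :: "nat \<Rightarrow> (nat \<Rightarrow> nat) \<Rightarrow> (nat \<Rightarrow> real) set" where
  "Fsigma n lam = pos (Ssg n lam) \<inter> Hsigma n lam"

end

theory Submission
  imports Defs "HOL-Computational_Algebra.Computational_Algebra"
begin

lemma NT_dvd:
  fixes w :: "nat \<Rightarrow> int"
  assumes "finite A" "\<forall>j\<in>A. w j > 0" "wm > 0"
  shows "lcm (Gcd (w ` A)) wm dvd wm * x \<Longrightarrow> \<exists>c. x = (\<Sum>j\<in>A. c j * (lcm (w j) wm div wm))"
  using assms
proof (induction A arbitrary: x rule: finite_induct)
  case empty
  then show ?case by simp
next
  case (insert a A)
  define G where "G = Gcd (w ` A)"
  define P where "P = lcm (w a) wm"
  define Q where "Q = lcm G wm"
  have "lcm (Gcd (w ` insert a A)) wm = gcd P Q"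
    unfolding P_def Q_def G_def by (simp add: lcm.commute[of _ wm] lcm_gcd_distrib)
  with insert.prems(1) obtain k where k: "wm * x = gcd P Q * k" by (metis dvdE)
  obtain u v where uv: "u * P + v * Q = gcd P Q" using bezout_int by blast
  obtain q where q: "Q = wm * q" unfolding Q_def by (meson dvd_lcm2 dvdE)
  obtain l where l: "P = wm * l" unfolding P_def by (meson dvd_lcm2 dvdE)
  have ldef: "l = lcm (w a) wm div wm" using l insert.prems P_def by simp
  have "wm * x = k * (u * P + v * Q)" using k uv by simp
  also have "\<dots> = wm * (k*u*l + k*v*q)" using q l by (simp add: algebra_simps)
  finally have "wm * x = wm * (k*u*l + k*v*q)" .
  hence x: "x = k*u*l + k*v*q" using insert.prems by simp
  have "lcm (Gcd (w ` A)) wm dvd wm * (k*v*q)"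
    using q unfolding Q_def G_def[symmetric] by (simp add: algebra_simps)
  then obtain c where c: "k*v*q = (\<Sum>j\<in>A. c j * (lcm (w j) wm div wm))"
    using insert.IH insert.prems by auto
  define c' where "c' = c(a := k*u)"
  have "(\<Sum>j\<in>insert a A. c' j * (lcm (w j) wm div wm)) = k*u*l + (\<Sum>j\<in>A. c' j * (lcm (w j) wm div wm))"
    using insert.hyps by (simp add: c'_def ldef)
  also have "(\<Sum>j\<in>A. c' j * (lcm (w j) wm div wm)) = (\<Sum>j\<in>A. c j * (lcm (w j) wm div wm))"
    using insert.hyps by (intro sum.cong) (auto simp: c'_def)
  finally show ?case using x c by metis
qed

lemma NT:
  fixes w :: "nat \<Rightarrow> int"
  assumes "finite A" "\<forall>j\<in>A. w j > 0" "wm > 0" "wm * x = (\<Sum>j\<in>A. w j * y j)"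
  shows "\<exists>c. x = (\<Sum>j\<in>A. c j * (lcm (w j) wm div wm))"
proof -
  have "Gcd (w ` A) dvd wm * x" unfolding assms(4)
    by (intro dvd_sum) (simp add: Gcd_dvd)
  hence "lcm (Gcd (w ` A)) wm dvd wm * x" by simp
  thus ?thesis using NT_dvd assms by blast
qed

lemma grp_smult_nat: "x \<in> grp T \<Longrightarrow> (\<lambda>j. int k * x j) \<in> grp T"
proof (induction k)
  case 0
  then show ?case using grp.zero by simp
next
  case (Suc k)
  then have "(\<lambda>j. (\<lambda>j. int k * x j) j + x j) \<in> grp T" by (intro grp.add)
  then show ?case by (simp add: algebra_simps)
qed

lemma grp_smult: "x \<in> grp T \<Longrightarrow> (\<lambda>j. k * x j) \<in> grp T"
proof (cases "k \<ge> 0")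
  case True
  assume "x \<in> grp T"
  then have "(\<lambda>j. int (nat k) * x j) \<in> grp T" by (rule grp_smult_nat)
  then show ?thesis using True by simp
next
  case False
  assume "x \<in> grp T"
  then have "(\<lambda>j. - (\<lambda>j. int (nat (-k)) * x j) j) \<in> grp T" by (intro grp.neg grp_smult_nat)
  then show ?thesis using False by simp
qed

lemma grp_sum: "finite A \<Longrightarrow> (\<forall>a\<in>A. f a \<in> grp T) \<Longrightarrow> (\<lambda>j. \<Sum>a\<in>A. f a j) \<in> grp T"
proof (induction A rule: finite_induct)
  case empty
  then show ?case using grp.zero by simp
next
  case (insert a A)
  then have "(\<lambda>j. f a j + (\<lambda>j. \<Sum>a\<in>A. f a j) j) \<in> grp T" by (intro grp.add) auto
  then show ?case using insert.hyps by simp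
qed

lemma grp_mono: "x \<in> grp S \<Longrightarrow> S \<subseteq> T \<Longrightarrow> x \<in> grp T"
  by (induction rule: grp.induct) (auto intro: grp.intros)

lemma sum2:
  assumes "finite S" "j \<in> S" "m \<in> S" "j \<noteq> m" "\<forall>k\<in>S. k \<noteq> j \<and> k \<noteq> m \<longrightarrow> g k = 0"
  shows "sum g S = g j + g m"
proof -
  have "sum g S = sum g {j, m}" using assms by (intro sum.mono_neutral_right) auto
  thus ?thesis using assms by simp
qed

lemma sum1:
  assumes "finite S" "m \<in> S" "\<forall>k\<in>S. k \<noteq> m \<longrightarrow> g k = 0"
  shows "sum g S = g m"
proof -
  have "sum g S = sum g {m}" using assms by (intro sum.mono_neutral_right) auto
  thus ?thesis using assms by simp
qed

lemma Ssg_support: "x \<in> semigroup_gen (gens n lam) \<Longrightarrow> j \<notin> {1..n+1} \<Longrightarrow> x j = 0"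
  by (induction rule: semigroup_gen.induct) (auto simp: gens_def unitv_def)

lemma grp_support: "x \<in> grp S \<Longrightarrow> (\<forall>s\<in>S. s j = 0) \<Longrightarrow> x j = 0"
  by (induction rule: grp.induct) auto

theorem mainTheorem12:
  fixes n :: nat and lam :: "nat \<Rightarrow> nat" and I :: "nat set"
  assumes "n \<ge> 1"
    and "\<forall>i\<in>{1..n}. lam i > 0"
    and "I \<subseteq> {1..n}" and "I \<noteq> {}"
  shows "grp {s \<in> Ssg n lam. emb s \<in> (\<Inter>i\<in>I. Fcoord n lam i) \<inter> Fsigma n lam}
       = {v \<in> grp (Ssg n lam). emb v \<in> (\<Inter>i\<in>I. Hcoord i) \<inter> Hsigma n lam}"
    (is "grp ?T = ?R")
proof -
  note lampos = assms(2)
  define L where "L = int (Lval n lam)"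
  define w where "w = (\<lambda>j. int (omega n lam j))"
  define sig where "sig = (\<lambda>v::nat\<Rightarrow>int. (\<Sum>j=1..n. w j * v j) - L * v (n+1))"
  have Lpos': "Lval n lam > 0"
  proof -
    have "0 \<notin> lam ` {1..n}" using lampos by auto
    hence "Lcm (lam ` {1..n}) \<noteq> 0" using Lcm_0_iff_nat[of "lam ` {1..n}"] by blast
    thus ?thesis unfolding Lval_def by (metis not_gr_zero)
  qed
  hence Lpos: "L > 0" unfolding L_def by simp
  have dvdL: "lam j dvd Lval n lam" if "j \<in> {1..n}" for j
    unfolding Lval_def using that by (intro dvd_Lcm) auto
  have wlam: "w j * int (lam j) = L" if "j \<in> {1..n}" for j
  proof -
    have "omega n lam j * lam j = Lval n lam" unfolding omega_def using dvdL[OF that] by simp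
    thus ?thesis unfolding w_def L_def by (metis of_nat_mult)
  qed
  have wpos: "w j > 0" if "j \<in> {1..n}" for j
  proof -
    have "w j * int (lam j) > 0" using wlam[OF that] Lpos by simp
    moreover have "int (lam j) > 0" using lampos that by simp
    ultimately show ?thesis using zero_less_mult_pos2 by blast
  qed
  have wdvd: "w j dvd L" if "j \<in> {1..n}" for j using wlam[OF that] by (metis dvd_triv_left)
  have sig_emb: "sigma n lam (emb v) = real_of_int (sig v)" for v
    by (simp add: sigma_def emb_def sig_def w_def L_def)
  have emb_app: "emb s i = real_of_int (s i)" for s i by (simp add: emb_def)
  have sig_add: "sig (\<lambda>j. x j + y j) = sig x + sig y" for x y
    by (simp add: sig_def sum.distrib algebra_simps)
  have sig_neg: "sig (\<lambda>j. - x j) = - sig x" for x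
    by (simp add: sig_def sum_negf algebra_simps)
  have pos_self: "emb s \<in> pos S" if "s \<in> S" for s S
    unfolding pos_def using that
    by (intro CollectI exI[of _ "{s}"] exI[of _ "\<lambda>_. 1"]) (auto simp: emb_def)
  have Tchar: "s \<in> ?T \<longleftrightarrow> s \<in> Ssg n lam \<and> (\<forall>i\<in>I. s i = 0) \<and> sig s = 0" for s
  proof
    assume "s \<in> ?T"
    thus "s \<in> Ssg n lam \<and> (\<forall>i\<in>I. s i = 0) \<and> sig s = 0"
      by (auto simp: Fcoord_def Fsigma_def Hcoord_def Hsigma_def sig_emb emb_app assms(4))
  next
    assume h: "s \<in> Ssg n lam \<and> (\<forall>i\<in>I. s i = 0) \<and> sig s = 0"
    hence "emb s \<in> pos (Ssg n lam)" using pos_self by blast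
    thus "s \<in> ?T" using h
      by (auto simp: Fcoord_def Fsigma_def Hcoord_def Hsigma_def sig_emb emb_app assms(4))
  qed
  have sig_grpT: "sig x = 0" if "x \<in> grp ?T" for x
    using that
  proof (induction rule: grp.induct)
    case zero
    then show ?case by (simp add: sig_def)
  next
    case (gen t)
    then show ?case using Tchar by blast
  next
    case (add x y)
    then show ?case by (simp only: sig_add)
  next
    case (neg x)
    then show ?case by (simp only: sig_neg)
  qed
  have sub1: "x \<in> grp (Ssg n lam) \<and> (\<forall>i\<in>I. x i = 0)" if "x \<in> grp ?T" for x
    using that
  proof (induction rule: grp.induct)
    case (gen t)
    then show ?case using Tchar[of t] by (auto intro: grp.intros)
  qed (auto intro: grp.intros)
  have sig_supp: "sig v = (\<Sum>j\<in>A. w j * v j) - L * v (n+1)"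
    if "A \<subseteq> {1..n}" "\<forall>j. j \<notin> A \<longrightarrow> j \<noteq> n+1 \<longrightarrow> v j = 0" for A v
  proof -
    have "(\<Sum>j=1..n. w j * v j) = (\<Sum>j\<in>A. w j * v j)"
      using that by (intro sum.mono_neutral_right) auto
    thus ?thesis unfolding sig_def by simp
  qed
  define J where "J = {1..n} - I"
  have memT: "s \<in> ?T" if "\<forall>j. j \<notin> {1..n+1} \<longrightarrow> s j = 0" "s (n+1) = 1" "\<forall>j\<in>{1..n}. s j \<ge> 0"
    "(\<Sum>j=1..n. w j * s j) = L" "\<forall>i\<in>I. s i = 0" for s
  proof -
    have "s \<in> gens n lam" unfolding gens_def using that by (auto simp: w_def L_def)
    hence "s \<in> Ssg n lam" unfolding Ssg_def by (rule semigroup_gen.gen)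
    moreover have "sig s = 0" unfolding sig_def using that by simp
    ultimately show ?thesis using that Tchar by blast
  qed
  define E where "E = (\<lambda>m k. if k = m then int (lam m) else if k = n+1 then 1 else (0::int))"
  have ET: "E m \<in> ?T" if "m \<in> J" for m
  proof (rule memT)
    have m: "m \<in> {1..n}" using that J_def by auto
    show "(\<Sum>j=1..n. w j * E m j) = L"
      using m by (subst sum1[of _ m]) (auto simp: E_def wlam)
  qed (use that assms(3) in \<open>auto simp: E_def J_def\<close>)
  define lc where "lc = (\<lambda>j m. lcm (w j) (w m))"
  define B where "B = (\<lambda>j m k. if k = j then lc j m div w j else if k = m then (L - lc j m) div w m
                          else if k = n+1 then 1 else (0::int))"
  have BT: "B j m \<in> ?T" if "j \<in> J" "m \<in> J" "j \<noteq> m" for j m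
  proof (rule memT)
    have jm: "j \<in> {1..n}" "m \<in> {1..n}" using that J_def by auto
    have lcL: "lc j m dvd L" unfolding lc_def using wdvd jm by (simp add: lcm_least)
    have lcpos: "lc j m > 0" unfolding lc_def using wpos[OF jm(1)] wpos[OF jm(2)]
      by (metis lcm_eq_0_iff lcm_ge_0_int less_le)
    have lcle: "lc j m \<le> L" using lcL Lpos zdvd_imp_le by blast
    have e1: "w j * (lc j m div w j) = lc j m" unfolding lc_def by simp
    have e2: "w m * ((L - lc j m) div w m) = L - lc j m"
    proof -
      have "w m dvd L - lc j m" using wdvd[OF jm(2)] unfolding lc_def by (intro dvd_diff) auto
      thus ?thesis by (rule dvd_mult_div_cancel)
    qed
    show "(\<Sum>k=1..n. w k * B j m k) = L"
      using jm that(3) by (subst sum2[of _ j m]) (auto simp: B_def e1 e2)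
    show "\<forall>k\<in>{1..n}. B j m k \<ge> 0"
      using lcpos lcle wpos jm by (auto simp: B_def pos_imp_zdiv_nonneg_iff)
  qed (use that assms(3) in \<open>auto simp: B_def J_def\<close>)
  define V where "V = (\<lambda>j m k. B j m k + - E m k)"
  have VT: "V j m \<in> grp ?T" if "j \<in> J" "m \<in> J" "j \<noteq> m" for j m
    unfolding V_def using BT[OF that] ET[OF that(2)] by (intro grp.add grp.neg grp.gen)
  have Vm: "V j m m = - (lc j m div w m)" if "j \<in> J" "m \<in> J" "j \<noteq> m" for j m
  proof -
    have jm: "j \<in> {1..n}" "m \<in> {1..n}" using that J_def by auto
    have "lam m = L div w m" using wlam[OF jm(2)] wpos[OF jm(2)] by (metis nonzero_mult_div_cancel_left less_irrefl)
    moreover have "w m dvd lc j m" unfolding lc_def by simp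
    ultimately show ?thesis using that jm wdvd[OF jm(2)] unfolding V_def B_def E_def
      by (auto simp: div_diff)
  qed
  have V0: "V j m k = 0" if "k \<noteq> j" "k \<noteq> m" for j m k
    using that unfolding V_def B_def E_def by auto
  have claim: "\<forall>v. (\<forall>j. j \<notin> A \<longrightarrow> j \<noteq> n+1 \<longrightarrow> v j = 0) \<longrightarrow> sig v = 0 \<longrightarrow> v \<in> grp ?T"
    if "finite A" "A \<subseteq> J" for A
    using that
  proof (induction A rule: finite_induct)
    case empty
    show ?case
    proof (intro allI impI)
      fix v :: "nat \<Rightarrow> int"
      assume h: "\<forall>j. j \<notin> {} \<longrightarrow> j \<noteq> n+1 \<longrightarrow> v j = 0" "sig v = 0"
      have "sig v = - L * v (n+1)" using sig_supp[of "{}" v] h by simp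
      hence "v (n+1) = 0" using h Lpos by simp
      hence vk: "v k = 0" for k using h(1) by (cases "k = n+1") auto
      have "v = (\<lambda>_. 0)" using vk by (intro ext) simp
      thus "v \<in> grp ?T" using grp.zero by simp
    qed
  next
    case (insert m A)
    show ?case
    proof (intro allI impI)
      fix v :: "nat \<Rightarrow> int"
      assume h: "\<forall>j. j \<notin> insert m A \<longrightarrow> j \<noteq> n+1 \<longrightarrow> v j = 0" "sig v = 0"
      have mJ: "m \<in> J" and AJ: "A \<subseteq> J" using insert.prems by auto
      have m1: "m \<in> {1..n}" using mJ J_def by auto
      have A1: "A \<subseteq> {1..n}" using AJ J_def by auto
      define a where "a = v (n+1)"
      define x where "x = v m - a * int (lam m)"
      have "sig v = (\<Sum>j\<in>insert m A. w j * v j) - L * a"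
        using sig_supp[of "insert m A" v] h A1 m1 a_def by simp
      hence "w m * v m + (\<Sum>j\<in>A. w j * v j) - L * a = 0" using h insert.hyps by simp
      hence eq: "w m * x = (\<Sum>j\<in>A. w j * (- v j))"
        unfolding x_def using wlam[OF m1] by (simp add: sum_negf algebra_simps)
      obtain c where c: "x = (\<Sum>j\<in>A. c j * (lcm (w j) (w m) div w m))"
        using NT[OF insert.hyps(1) _ wpos[OF m1] eq] wpos A1 by blast
      define g where "g = (\<lambda>k. (\<lambda>k. (-a) * E m k) k + (\<lambda>k. \<Sum>j\<in>A. c j * V j m k) k)"
      have jm: "j \<noteq> m" if "j \<in> A" for j using that insert.hyps by auto
      have gT: "g \<in> grp ?T" unfolding g_def
      proof (rule grp.add)
        show "(\<lambda>k. (-a) * E m k) \<in> grp ?T" using ET[OF mJ] by (intro grp_smult grp.gen)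
        have "\<forall>j\<in>A. (\<lambda>k. c j * V j m k) \<in> grp ?T"
        proof
          fix j assume "j \<in> A"
          hence "V j m \<in> grp ?T" using VT AJ mJ jm by auto
          thus "(\<lambda>k. c j * V j m k) \<in> grp ?T" by (rule grp_smult)
        qed
        thus "(\<lambda>k. \<Sum>j\<in>A. c j * V j m k) \<in> grp ?T" using grp_sum[OF insert.hyps(1), of "\<lambda>j k. c j * V j m k" ?T] by simp
      qed
      define v2 where "v2 = (\<lambda>k. v k + g k)"
      have "sig v2 = 0" unfolding v2_def using sig_add h sig_grpT[OF gT] by simp
      moreover have "\<forall>j. j \<notin> A \<longrightarrow> j \<noteq> n+1 \<longrightarrow> v2 j = 0"
      proof (intro allI impI)
        fix k assume k: "k \<notin> A" "k \<noteq> n+1"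
        show "v2 k = 0"
        proof (cases "k = m")
          case True
          have "(\<Sum>j\<in>A. c j * V j m m) = - (\<Sum>j\<in>A. c j * (lcm (w j) (w m) div w m))"
            using Vm AJ mJ jm by (auto simp: sum_negf[symmetric] lc_def intro!: sum.cong)
          thus ?thesis using True c unfolding v2_def g_def x_def a_def E_def by simp
        next
          case False
          have "(\<Sum>j\<in>A. c j * V j m k) = 0" using k False by (intro sum.neutral ballI) (metis V0 mult_zero_right)
          thus ?thesis using False k h unfolding v2_def g_def E_def by simp
        qed
      qed
      ultimately have "v2 \<in> grp ?T" using insert.IH AJ by blast
      hence "(\<lambda>k. v2 k + - g k) \<in> grp ?T" using gT by (intro grp.add grp.neg)
      moreover have "(\<lambda>k. v2 k + - g k) = v" unfolding v2_def by simp
      ultimately show "v \<in> grp ?T" by simp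
    qed
  qed
  show ?thesis
  proof
    show "grp ?T \<subseteq> ?R"
    proof
      fix x assume "x \<in> grp ?T"
      with sub1 sig_grpT show "x \<in> ?R"
        by (auto simp: Hcoord_def Hsigma_def sig_emb emb_app assms(4))
    qed
  next
    show "?R \<subseteq> grp ?T"
    proof
      fix v assume v: "v \<in> ?R"
      hence vg: "v \<in> grp (Ssg n lam)" and vI: "\<forall>i\<in>I. v i = 0" and vs: "sig v = 0"
        by (auto simp: Hcoord_def Hsigma_def sig_emb emb_app assms(4))
      have "v j = 0" if "j \<notin> J" "j \<noteq> n+1" for j
      proof (cases "j \<in> I")
        case True thus ?thesis using vI by auto
      next
        case False
        hence "j \<notin> {1..n+1}" using that J_def by auto
        thus ?thesis using grp_support[OF vg] Ssg_support unfolding Ssg_def by blast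
      qed
      thus "v \<in> grp ?T" using claim[of J] J_def vs by auto
    qed
  qed
qed

end
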